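(* Let $\Gamma$ be a connected imprimitive strongly regular graph. Then $E(\Gamma)=E(\bar\Gamma)$ if and only if $\Gamma\cong K_{m\times m}$ for some integer $m>1$. In this case $E(K_{m\times m})=2(m-1)m$, and hence $4\mid E(K_{m\times m})$.
   Context: A strongly regular graph with parameters $(n,k,e,d)$ is a $k$-regular simple graph on $n$ vertices, neither complete nor edgeless, in which every two adjacent vertices have exactly $e$ common neighbours and every two distinct non-adjacent vertices have exactly $d$ common neighbours. It is primitive if both it and its complement are connected, and imprimitive otherwise. $K_{a\times m}$ denotes the complete multipartite graph with $a$ parts each of size $m$. The energy $E(\Gamma)$ is the sum of the absolute values of the adjacency eigenvalues (with multiplicity); $\bar\Gamma$ is the complement. *)

theory Defs
  imports Complex_Main "Jordan_Normal_Form.Char_Poly"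
begin

text \<open>A finite simple graph on the vertex set {0..<n}, given by an adjacency
  relation adj (only its values on vertices matter).\<close>

definition simple_graph :: "nat \<Rightarrow> (nat \<Rightarrow> nat \<Rightarrow> bool) \<Rightarrow> bool" where
  "simple_graph n adj \<longleftrightarrow>
     (\<forall>i<n. \<forall>j<n. adj i j \<longleftrightarrow> adj j i) \<and> (\<forall>i<n. \<not> adj i i)"

definition complement :: "nat \<Rightarrow> (nat \<Rightarrow> nat \<Rightarrow> bool) \<Rightarrow> (nat \<Rightarrow> nat \<Rightarrow> bool)" where
  "complement n adj = (\<lambda>i j. i < n \<and> j < n \<and> i \<noteq> j \<and> \<not> adj i j)"

definition common_nbrs :: "nat \<Rightarrow> (nat \<Rightarrow> nat \<Rightarrow> bool) \<Rightarrow> nat \<Rightarrow> nat \<Rightarrow> nat" where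
  "common_nbrs n adj i j = card {w. w < n \<and> adj i w \<and> adj j w}"

definition degree :: "nat \<Rightarrow> (nat \<Rightarrow> nat \<Rightarrow> bool) \<Rightarrow> nat \<Rightarrow> nat" where
  "degree n adj i = card {w. w < n \<and> adj i w}"

definition strongly_regular ::
  "nat \<Rightarrow> (nat \<Rightarrow> nat \<Rightarrow> bool) \<Rightarrow> nat \<Rightarrow> nat \<Rightarrow> nat \<Rightarrow> bool" where
  "strongly_regular n adj k e d \<longleftrightarrow>
     simple_graph n adj \<and>
     (\<exists>i<n. \<exists>j<n. i \<noteq> j \<and> \<not> adj i j) \<and>   \<comment> \<open>not complete\<close>
     (\<exists>i<n. \<exists>j<n. adj i j) \<and>                 \<comment> \<open>not edgeless\<close>
     (\<forall>i<n. degree n adj i = k) \<and>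
     (\<forall>i<n. \<forall>j<n. adj i j \<longrightarrow> common_nbrs n adj i j = e) \<and>
     (\<forall>i<n. \<forall>j<n. i \<noteq> j \<and> \<not> adj i j \<longrightarrow> common_nbrs n adj i j = d)"

definition is_srg :: "nat \<Rightarrow> (nat \<Rightarrow> nat \<Rightarrow> bool) \<Rightarrow> bool" where
  "is_srg n adj \<longleftrightarrow> (\<exists>k e d. strongly_regular n adj k e d)"

definition connected_graph :: "nat \<Rightarrow> (nat \<Rightarrow> nat \<Rightarrow> bool) \<Rightarrow> bool" where
  "connected_graph n adj \<longleftrightarrow>
     (\<forall>i<n. \<forall>j<n. (\<lambda>x y. x < n \<and> y < n \<and> adj x y)\<^sup>*\<^sup>* i j)"

definition primitive_srg :: "nat \<Rightarrow> (nat \<Rightarrow> nat \<Rightarrow> bool) \<Rightarrow> bool" where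
  "primitive_srg n adj \<longleftrightarrow> connected_graph n adj \<and> connected_graph n (complement n adj)"

definition imprimitive_srg :: "nat \<Rightarrow> (nat \<Rightarrow> nat \<Rightarrow> bool) \<Rightarrow> bool" where
  "imprimitive_srg n adj \<longleftrightarrow> is_srg n adj \<and> \<not> primitive_srg n adj"

definition adj_matrix :: "nat \<Rightarrow> (nat \<Rightarrow> nat \<Rightarrow> bool) \<Rightarrow> real mat" where
  "adj_matrix n adj = mat n n (\<lambda>(i, j). if adj i j then 1 else 0)"

definition energy :: "nat \<Rightarrow> (nat \<Rightarrow> nat \<Rightarrow> bool) \<Rightarrow> real" where
  "energy n adj = sum_mset (image_mset cmod
      (proots (char_poly (map_mat complex_of_real (adj_matrix n adj)))))"

text \<open>Complete multipartite graph K_{a x m} on {0..<a*m}: parts are the blocks i div m.\<close>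
definition complete_multipartite :: "nat \<Rightarrow> nat \<Rightarrow> (nat \<Rightarrow> nat \<Rightarrow> bool)" where
  "complete_multipartite a m = (\<lambda>i j. i < a * m \<and> j < a * m \<and> i div m \<noteq> j div m)"

definition graph_iso ::
  "nat \<Rightarrow> (nat \<Rightarrow> nat \<Rightarrow> bool) \<Rightarrow> nat \<Rightarrow> (nat \<Rightarrow> nat \<Rightarrow> bool) \<Rightarrow> bool" where
  "graph_iso n adj n' adj' \<longleftrightarrow>
     (\<exists>f. bij_betw f {0..<n} {0..<n'} \<and>
          (\<forall>i<n. \<forall>j<n. adj i j \<longleftrightarrow> adj' (f i) (f j)))"

end

theory Submission
  imports Defs "Jordan_Normal_Form.Schur_Decomposition"
begin

definition tr :: "'a::comm_ring_1 mat \<Rightarrow> 'a" where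
  "tr M = (\<Sum>i<dim_row M. M $$ (i,i))"

lemma tr_mult_comm:
  fixes A B :: "'a::comm_ring_1 mat"
  assumes A: "A \<in> carrier_mat n n" and B: "B \<in> carrier_mat n n"
  shows "tr (A * B) = tr (B * A)"
proof -
  have "tr (A * B) = (\<Sum>i<n. \<Sum>j<n. A $$ (i,j) * B $$ (j,i))"
    using A B by (auto simp: tr_def scalar_prod_def atLeast0LessThan intro!: sum.cong)
  also have "\<dots> = (\<Sum>j<n. \<Sum>i<n. B $$ (j,i) * A $$ (i,j))"
    by (subst sum.swap) (simp add: mult.commute)
  also have "\<dots> = tr (B * A)"
    using A B by (auto simp: tr_def scalar_prod_def atLeast0LessThan intro!: sum.cong)
  finally show ?thesis .
qed

lemma tr_similar_wit:
  fixes A B :: "'a::comm_ring_1 mat"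
  assumes "similar_mat_wit A B P Q"
  shows "tr A = tr B"
proof -
  define n where "n = dim_row A"
  from similar_mat_witD[OF refl assms, folded n_def] have
    A: "A \<in> carrier_mat n n" and B: "B \<in> carrier_mat n n" and P: "P \<in> carrier_mat n n"
    and Q: "Q \<in> carrier_mat n n" and QP: "Q * P = 1\<^sub>m n" and AB: "A = P * B * Q" by auto
  have "tr A = tr (P * (B * Q))" using AB P B Q by (simp add: assoc_mult_mat)
  also have "\<dots> = tr ((B * Q) * P)" using P B Q by (intro tr_mult_comm) auto
  also have "\<dots> = tr (B * (Q * P))" using P B Q by (simp add: assoc_mult_mat)
  also have "\<dots> = tr B" using QP B by simp
  finally show ?thesis .
qed

lemma upper_tri_sq_diag:
  fixes B :: "'a::comm_ring_1 mat"
  assumes B: "B \<in> carrier_mat n n" and ut: "upper_triangular B" and i: "i < n"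
  shows "(B * B) $$ (i,i) = B $$ (i,i) * B $$ (i,i)"
proof -
  have "(B * B) $$ (i,i) = (\<Sum>k\<in>{0..<n}. B $$ (i,k) * B $$ (k,i))"
    using B i by (simp add: scalar_prod_def)
  also have "\<dots> = B $$ (i,i) * B $$ (i,i)"
  proof -
    have "(\<Sum>k\<in>{0..<n}. B $$ (i,k) * B $$ (k,i)) = B $$ (i,i) * B $$ (i,i) + (\<Sum>k\<in>{0..<n} - {i}. B $$ (i,k) * B $$ (k,i))"
      using i by (subst sum.remove[of _ i]) auto
    also have "(\<Sum>k\<in>{0..<n} - {i}. B $$ (i,k) * B $$ (k,i)) = 0"
    proof (rule sum.neutral, intro ballI)
      fix k assume "k \<in> {0..<n} - {i}"
      then show "B $$ (i,k) * B $$ (k,i) = 0"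
        using ut B i by (cases "k < i") (auto simp: upper_triangular_def)
    qed
    finally show ?thesis by simp
  qed
  finally show ?thesis .
qed

lemma spectral_traces:
  fixes A :: "complex mat"
  assumes A: "A \<in> carrier_mat n n"
  shows "sum_mset (proots (char_poly A)) = tr A"
    and "sum_mset (image_mset (\<lambda>x. x * x) (proots (char_poly A))) = tr (A * A)"
proof -
  obtain as where cp: "char_poly A = (\<Prod>a\<leftarrow>as. [:- a, 1:])" and len: "length as = n"
    using char_poly_factorized[OF A] by auto
  obtain B P Q where sd: "schur_decomposition A as = (B,P,Q)"
    by (cases "schur_decomposition A as") auto
  from schur_decomposition[OF A cp sd] have sim: "similar_mat_wit A B P Q"
    and ut: "upper_triangular B" and dg: "diag_mat B = as" by auto
  from similar_mat_witD2[OF A sim] have B: "B \<in> carrier_mat n n" by auto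
  have pr0: "proots (\<Prod>a\<leftarrow>bs. [:- a, 1:]) = mset bs" for bs :: "complex list"
  proof (induction bs)
    case (Cons b bs)
    have nz: "(\<Prod>a\<leftarrow>bs. [:- a, 1:]) \<noteq> 0" by (auto simp: prod_list_zero_iff)
    have "proots ([:- b, 1:] * (\<Prod>a\<leftarrow>bs. [:- a, 1:])) = proots [:- b, 1:] + proots (\<Prod>a\<leftarrow>bs. [:- a, 1:])"
      using nz by (intro proots_mult) auto
    then show ?case using Cons by (simp del: pCons_eq_0_iff mult_pCons_left)
  qed simp
  have pr: "proots (char_poly A) = mset as" using cp pr0 by simp
  have asB: "as = map (\<lambda>i. B $$ (i,i)) [0..<n]" using dg B by (simp add: diag_mat_def)
  show "sum_mset (proots (char_poly A)) = tr A"
    unfolding pr tr_similar_wit[OF sim] asB using B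
    by (simp add: tr_def sum_list_sum_nth atLeast0LessThan sum_unfold_sum_mset)
  have sim2: "similar_mat_wit (A * A) (B * B) P Q"
    using similar_mat_wit_pow[OF sim, of 2] A B by (simp add: numeral_2_eq_2)
  have "sum_mset (image_mset (\<lambda>x. x * x) (mset as)) = (\<Sum>i<n. B $$ (i,i) * B $$ (i,i))"
    unfolding asB by (simp add: sum_list_sum_nth atLeast0LessThan sum_unfold_sum_mset image_mset.compositionality o_def)
  also have "\<dots> = tr (B * B)" using B upper_tri_sq_diag[OF B ut] by (simp add: tr_def)
  also have "\<dots> = tr (A * A)" using tr_similar_wit[OF sim2] by simp
  finally show "sum_mset (image_mset (\<lambda>x. x * x) (proots (char_poly A))) = tr (A * A)"
    using pr by simp
qed

lemma roots_eigen:
  fixes A :: "complex mat"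
  assumes A: "A \<in> carrier_mat n n" and x: "x \<in># proots (char_poly A)"
  shows "eigenvalue A x"
proof -
  have "char_poly A \<noteq> 0" using degree_monic_char_poly[OF A] by auto
  then have "poly (char_poly A) x = 0" using x by simp
  then show ?thesis using eigenvalue_root_char_poly[OF A] by simp
qed

lemma mset_three:
  fixes R :: "complex multiset" and p q :: real
  assumes "set_mset R \<subseteq> {complex_of_real p, 0, - complex_of_real q}" and p: "p > 0" and q: "q > 0"
  shows "sum_mset R = complex_of_real (real (count R (complex_of_real p)) * p - real (count R (- complex_of_real q)) * q)
     \<and> sum_mset (image_mset (\<lambda>x. x * x) R) = complex_of_real (real (count R (complex_of_real p)) * p * p + real (count R (- complex_of_real q)) * q * q)
     \<and> sum_mset (image_mset cmod R) = real (count R (complex_of_real p)) * p + real (count R (- complex_of_real q)) * q"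
  using assms(1)
proof (induction R)
  case empty
  then show ?case by simp
next
  case (add x R)
  then have IH: "sum_mset R = complex_of_real (real (count R (complex_of_real p)) * p - real (count R (- complex_of_real q)) * q)
     \<and> sum_mset (image_mset (\<lambda>x. x * x) R) = complex_of_real (real (count R (complex_of_real p)) * p * p + real (count R (- complex_of_real q)) * q * q)
     \<and> sum_mset (image_mset cmod R) = real (count R (complex_of_real p)) * p + real (count R (- complex_of_real q)) * q"
    by auto
  have x: "x = complex_of_real p \<or> x = 0 \<or> x = - complex_of_real q" using add.prems by auto
  have d1: "complex_of_real p \<noteq> - complex_of_real q"
  proof
    assume "complex_of_real p = - complex_of_real q"
    then have "complex_of_real p = complex_of_real (- q)" by simp
    then have "p = -q" using of_real_eq_iff by blast
    then show False using p q by simp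
  qed
  have d2: "complex_of_real p \<noteq> 0" using p by simp
  have d3: "- complex_of_real q \<noteq> 0" using q by simp
  from x show ?case
  proof (elim disjE)
    assume "x = complex_of_real p"
    then show ?thesis using IH d1 d2 d3 p by (simp add: algebra_simps)
  next
    assume "x = 0"
    then show ?thesis using IH d1 d2 d3 by (simp add: algebra_simps)
  next
    assume "x = - complex_of_real q"
    then show ?thesis using IH d1 d2 d3 q by (simp add: algebra_simps)
  qed
qed

lemma adj_mat_carrier: "map_mat complex_of_real (adj_matrix n G) \<in> carrier_mat n n"
  by (simp add: adj_matrix_def)

lemma graph_energy:
  fixes G :: "nat \<Rightarrow> nat \<Rightarrow> bool" and p q :: real
  assumes sym: "\<And>i j. i < n \<Longrightarrow> j < n \<Longrightarrow> G i j = G j i"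
    and irr: "\<And>i. i < n \<Longrightarrow> \<not> G i i"
    and deg: "\<And>i. i < n \<Longrightarrow> card {j. j < n \<and> G i j} = dg"
    and ev: "\<And>x. eigenvalue (map_mat complex_of_real (adj_matrix n G)) x \<Longrightarrow>
                  x \<in> {complex_of_real p, 0, - complex_of_real q}"
    and p: "p > 0" and q: "q > 0"
  shows "energy n G = 2 * real n * real dg / (p + q)"
proof -
  define M where "M = map_mat complex_of_real (adj_matrix n G)"
  have M: "M \<in> carrier_mat n n" unfolding M_def by (rule adj_mat_carrier)
  define R where "R = proots (char_poly M)"
  have sub: "set_mset R \<subseteq> {complex_of_real p, 0, - complex_of_real q}"
    using roots_eigen[OF M] ev unfolding R_def M_def by blast
  define \<alpha> where "\<alpha> = real (count R (complex_of_real p))"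
  define \<gamma> where "\<gamma> = real (count R (- complex_of_real q))"
  note three = mset_three[OF sub p q, folded \<alpha>_def \<gamma>_def]
  have Mij: "M $$ (i,j) = (if G i j then 1 else 0)" if "i < n" "j < n" for i j
    using that by (simp add: M_def adj_matrix_def)
  have trM: "tr M = 0" using M irr by (simp add: tr_def Mij)
  have "tr (M * M) = (\<Sum>i<n. \<Sum>j<n. M $$ (i,j) * M $$ (j,i))"
    using M by (auto simp: tr_def scalar_prod_def atLeast0LessThan intro!: sum.cong)
  also have "\<dots> = (\<Sum>i<n. \<Sum>j | j < n \<and> G i j. 1)"
  proof (rule sum.cong[OF refl])
    fix i assume i: "i \<in> {..<n}"
    have "(\<Sum>j<n. M $$ (i,j) * M $$ (j,i)) = (\<Sum>j<n. if G i j then 1 else 0)"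
      using i sym by (intro sum.cong) (auto simp: Mij)
    also have "\<dots> = (\<Sum>j | j < n \<and> G i j. 1)"
      by (simp add: sum.If_cases lessThan_def Collect_conj_eq Int_commute)
    finally show "(\<Sum>j<n. M $$ (i,j) * M $$ (j,i)) = (\<Sum>j | j < n \<and> G i j. 1)" .
  qed
  also have "\<dots> = (\<Sum>i<n. of_nat dg)" using deg by (intro sum.cong) auto
  also have "\<dots> = of_nat (n * dg)" by simp
  finally have trMM: "tr (M * M) = of_nat (n * dg)" .
  have e1: "complex_of_real (\<alpha> * p - \<gamma> * q) = 0"
    using three spectral_traces(1)[OF M] trM unfolding R_def by simp
  have e2: "complex_of_real (\<alpha> * p * p + \<gamma> * q * q) = of_nat (n * dg)"
    using three spectral_traces(2)[OF M] trMM unfolding R_def by simp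
  have r1: "\<alpha> * p = \<gamma> * q" using e1 by (simp del: of_real_diff add: of_real_eq_0_iff)
  have r2: "\<alpha> * p * p + \<gamma> * q * q = real (n * dg)"
    using e2 by (metis of_real_eq_iff of_real_of_nat_eq)
  have en: "energy n G = \<alpha> * p + \<gamma> * q"
    using three unfolding energy_def R_def M_def by simp
  have "real (n * dg) = \<gamma> * q * (p + q)" using r1 r2
    by (metis distrib_left mult.commute mult.left_commute)
  then have "\<gamma> * q = real n * real dg / (p + q)" using p q by (simp add: field_simps)
  then show ?thesis using en r1 by simp
qed

context
  fixes n s :: nat and Rel :: "nat \<Rightarrow> nat \<Rightarrow> bool"
  assumes Rrefl: "\<And>i. i < n \<Longrightarrow> Rel i i"
    and Rsym: "\<And>i j. i < n \<Longrightarrow> j < n \<Longrightarrow> Rel i j \<Longrightarrow> Rel j i"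
    and Rtrans: "\<And>i j k. i < n \<Longrightarrow> j < n \<Longrightarrow> k < n \<Longrightarrow> Rel i j \<Longrightarrow> Rel j k \<Longrightarrow> Rel i k"
    and Rcard: "\<And>i. i < n \<Longrightarrow> card {j. j < n \<and> Rel i j} = s"
begin

lemma cl_sum_const:
  fixes T :: "nat \<Rightarrow> complex"
  assumes i: "i < n" and Tc: "\<And>j. j < n \<Longrightarrow> Rel i j \<Longrightarrow> T j = T i"
  shows "(\<Sum>j | j < n \<and> Rel i j. T j) = of_nat s * T i"
proof -
  have "(\<Sum>j | j < n \<and> Rel i j. T j) = (\<Sum>j | j < n \<and> Rel i j. T i)"
    using Tc by (intro sum.cong) auto
  also have "\<dots> = of_nat s * T i" using Rcard[OF i] by simp
  finally show ?thesis .
qed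

definition csum :: "(nat \<Rightarrow> complex) \<Rightarrow> nat \<Rightarrow> complex" where
  "csum u i = (\<Sum>j | j < n \<and> Rel i j. u j)"

lemma csum_if: "(\<Sum>j<n. if Rel i j then u j else 0) = csum u i"
proof -
  have "(\<Sum>j<n. if Rel i j then u j else 0) = (\<Sum>j\<in>{..<n} \<inter> {j. Rel i j}. u j)"
    by (simp add: sum.inter_restrict)
  also have "{..<n} \<inter> {j. Rel i j} = {j. j < n \<and> Rel i j}" by auto
  finally show ?thesis unfolding csum_def .
qed

lemma csum_eq: "i < n \<Longrightarrow> j < n \<Longrightarrow> Rel i j \<Longrightarrow> csum u j = csum u i"
  unfolding csum_def
  by (rule sum.cong) (auto intro: Rtrans Rsym)

lemma csum_cl: "i < n \<Longrightarrow> (\<Sum>j | j < n \<and> Rel i j. csum u j) = of_nat s * csum u i"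
  by (rule cl_sum_const) (auto intro: csum_eq)

lemma csum_total: "(\<Sum>i<n. csum u i) = of_nat s * (\<Sum>j<n. u j)"
proof -
  have "(\<Sum>i<n. csum u i) = (\<Sum>i<n. \<Sum>j<n. if Rel i j then u j else 0)"
    by (simp add: csum_if)
  also have "\<dots> = (\<Sum>j<n. \<Sum>i<n. if Rel i j then u j else 0)" by (rule sum.swap)
  also have "\<dots> = (\<Sum>j<n. \<Sum>i | i < n \<and> Rel j i. u j)"
  proof (rule sum.cong[OF refl])
    fix j assume j: "j \<in> {..<n}"
    have "(\<Sum>i<n. if Rel i j then u j else 0) = (\<Sum>i<n. if Rel j i then u j else 0)"
      using j by (intro sum.cong refl) (auto intro: Rsym)
    also have "\<dots> = (\<Sum>i | i < n \<and> Rel j i. u j)"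
      by (simp add: sum.If_cases lessThan_def Collect_conj_eq Int_commute)
    finally show "(\<Sum>i<n. if Rel i j then u j else 0) = (\<Sum>i | i < n \<and> Rel j i. u j)" .
  qed
  also have "\<dots> = (\<Sum>j<n. of_nat s * u j)" using Rcard by (intro sum.cong) auto
  finally show ?thesis by (simp add: sum_distrib_left)
qed

lemma eig_generic:
  fixes M :: "complex mat"
  assumes ev: "eigenvalue M x" and M: "M \<in> carrier_mat n n"
  obtains u where "\<exists>i<n. u i \<noteq> 0" and "\<And>i. i < n \<Longrightarrow> x * u i = (\<Sum>j<n. M $$ (i,j) * u j)"
proof -
  from ev obtain v where v: "v \<in> carrier_vec n" "v \<noteq> 0\<^sub>v n" "M *\<^sub>v v = x \<cdot>\<^sub>v v"
    using M unfolding eigenvalue_def eigenvector_def by auto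
  have "\<exists>i<n. v $ i \<noteq> 0"
  proof (rule ccontr)
    assume "\<not> ?thesis"
    then have "v = 0\<^sub>v n" using v(1) by (intro eq_vecI) auto
    then show False using v(2) by simp
  qed
  moreover have "x * v $ i = (\<Sum>j<n. M $$ (i,j) * v $ j)" if i: "i < n" for i
  proof -
    have "x * v $ i = (M *\<^sub>v v) $ i" using v i by simp
    also have "\<dots> = row M i \<bullet> v" using M i by simp
    also have "\<dots> = (\<Sum>j<n. M $$ (i,j) * v $ j)"
      using M v i by (simp add: scalar_prod_def atLeast0LessThan)
    finally show ?thesis .
  qed
  ultimately show ?thesis using that by blast
qed

lemma eig_multipartite:
  fixes G :: "nat \<Rightarrow> nat \<Rightarrow> bool"
  assumes G: "\<And>i j. i < n \<Longrightarrow> j < n \<Longrightarrow> G i j \<longleftrightarrow> \<not> Rel i j"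
    and ev: "eigenvalue (map_mat complex_of_real (adj_matrix n G)) x"
  shows "x \<in> {complex_of_real (real (n - s)), 0, - complex_of_real (real s)}"
proof -
  obtain u where nz: "\<exists>i<n. u i \<noteq> 0"
    and eq0: "\<And>i. i < n \<Longrightarrow> x * u i = (\<Sum>j<n. (map_mat complex_of_real (adj_matrix n G)) $$ (i,j) * u j)"
    using eig_generic[OF ev adj_mat_carrier] by blast
  define S where "S = (\<Sum>j<n. u j)"
  have sn: "s \<le> n"
  proof (cases "n = 0")
    case True
    then show ?thesis using nz by auto
  next
    case False
    then have "card {j. j < n \<and> Rel 0 j} = s" using Rcard by simp
    moreover have "card {j. j < n \<and> Rel 0 j} \<le> card {..<n}" by (intro card_mono) auto
    ultimately show ?thesis by simp
  qed
  have eq: "x * u i = S - csum u i" if i: "i < n" for i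
  proof -
    have "x * u i = (\<Sum>j<n. if Rel i j then 0 else u j)"
      using eq0[OF i] i G by (auto simp: adj_matrix_def intro!: sum.cong)
    also have "\<dots> = S - csum u i"
    proof -
      have "S = (\<Sum>j<n. (if Rel i j then u j else 0) + (if Rel i j then 0 else u j))"
        unfolding S_def by (intro sum.cong) auto
      also have "\<dots> = (\<Sum>j<n. if Rel i j then u j else 0) + (\<Sum>j<n. if Rel i j then 0 else u j)"
        by (rule sum.distrib)
      finally have "S = (\<Sum>j<n. if Rel i j then u j else 0) + (\<Sum>j<n. if Rel i j then 0 else u j)" .
      moreover have "(\<Sum>j<n. if Rel i j then u j else 0) = csum u i"
        by (rule csum_if)
      ultimately show ?thesis by simp
    qed
    finally show ?thesis .
  qed
  have cl: "x * csum u i = of_nat s * S - of_nat s * csum u i" if i: "i < n" for i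
  proof -
    have "x * csum u i = (\<Sum>j | j < n \<and> Rel i j. x * u j)"
      unfolding csum_def by (simp add: sum_distrib_left)
    also have "\<dots> = (\<Sum>j | j < n \<and> Rel i j. S - csum u j)" using eq by (intro sum.cong) auto
    also have "\<dots> = of_nat s * S - of_nat s * csum u i"
      using csum_cl[OF i] Rcard[OF i] by (simp add: sum_subtractf)
    finally show ?thesis .
  qed
  have tot: "x * S = of_nat n * S - of_nat s * S"
  proof -
    have "x * S = (\<Sum>i<n. x * u i)" unfolding S_def by (simp add: sum_distrib_left)
    also have "\<dots> = (\<Sum>i<n. S - csum u i)" using eq by (intro sum.cong) auto
    also have "\<dots> = of_nat n * S - of_nat s * S" using csum_total[of u] by (simp add: sum_subtractf S_def)
    finally show ?thesis .
  qed
  show ?thesis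
  proof (cases "x = complex_of_real (real (n - s))")
    case True then show ?thesis by simp
  next
    case False
    have "(x - of_nat (n - s)) * S = 0" using tot sn by (simp add: algebra_simps of_nat_diff)
    then have S0: "S = 0" using False by simp
    show ?thesis
    proof (cases "x = - complex_of_real (real s)")
      case True then show ?thesis by simp
    next
      case False2: False
      have T0: "csum u i = 0" if i: "i < n" for i
      proof -
        have "(x + of_nat s) * csum u i = 0" using cl[OF i] S0 by (simp add: algebra_simps)
        moreover have "x + of_nat s \<noteq> 0"
        proof
          assume "x + of_nat s = 0"
          then have "x = - of_nat s" by (simp add: eq_neg_iff_add_eq_0)
          then show False using False2 by simp
        qed
        ultimately show ?thesis by simp
      qed
      obtain i where i: "i < n" "u i \<noteq> 0" using nz by blast
      have "x * u i = 0" using eq[OF i(1)] S0 T0[OF i(1)] by simp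
      then have "x = 0" using i by simp
      then show ?thesis by simp
    qed
  qed
qed

lemma eig_cliques:
  fixes H :: "nat \<Rightarrow> nat \<Rightarrow> bool"
  assumes H: "\<And>i j. i < n \<Longrightarrow> j < n \<Longrightarrow> H i j \<longleftrightarrow> i \<noteq> j \<and> Rel i j"
    and ev: "eigenvalue (map_mat complex_of_real (adj_matrix n H)) x"
    and s1: "s \<ge> 1"
  shows "x \<in> {complex_of_real (real s - 1), 0, - complex_of_real 1}"
proof -
  obtain u where nz: "\<exists>i<n. u i \<noteq> 0"
    and eq0: "\<And>i. i < n \<Longrightarrow> x * u i = (\<Sum>j<n. (map_mat complex_of_real (adj_matrix n H)) $$ (i,j) * u j)"
    using eig_generic[OF ev adj_mat_carrier] by blast
  have eq: "x * u i = csum u i - u i" if i: "i < n" for i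
  proof -
    have "x * u i = (\<Sum>j<n. (if Rel i j then u j else 0) - (if j = i then u j else 0))"
      using eq0[OF i] i H Rrefl[OF i]
      by (auto simp: adj_matrix_def intro!: sum.cong)
    also have "\<dots> = (\<Sum>j<n. if Rel i j then u j else 0) - (\<Sum>j<n. if j = i then u j else 0)"
      by (rule sum_subtractf)
    also have "(\<Sum>j<n. if Rel i j then u j else 0) = csum u i"
      by (rule csum_if)
    also have "(\<Sum>j<n. if j = i then u j else 0) = u i" using i by simp
    finally show ?thesis .
  qed
  have cl: "x * csum u i = of_nat s * csum u i - csum u i" if i: "i < n" for i
  proof -
    have "x * csum u i = (\<Sum>j | j < n \<and> Rel i j. x * u j)"
      unfolding csum_def by (simp add: sum_distrib_left)
    also have "\<dots> = (\<Sum>j | j < n \<and> Rel i j. csum u j - u j)" using eq by (intro sum.cong) auto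
    also have "\<dots> = of_nat s * csum u i - csum u i"
      using csum_cl[OF i] by (simp add: sum_subtractf csum_def)
    finally show ?thesis .
  qed
  show ?thesis
  proof (cases "x = complex_of_real (real s - 1)")
    case True then show ?thesis by simp
  next
    case False
    have T0: "csum u i = 0" if i: "i < n" for i
    proof -
      have "(x - (of_nat s - 1)) * csum u i = 0" using cl[OF i] by (simp add: algebra_simps)
      moreover have "x - (of_nat s - 1) \<noteq> 0" using False by simp
      ultimately show ?thesis by simp
    qed
    obtain i where i: "i < n" "u i \<noteq> 0" using nz by blast
    have "(x + 1) * u i = 0" using eq[OF i(1)] T0[OF i(1)] by (simp add: algebra_simps)
    then have "x + 1 = 0" using i by simp
    then have "x = -1" by (simp add: eq_neg_iff_add_eq_0)
    then show ?thesis by simp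
  qed
qed


lemma energy_multi:
  fixes G :: "nat \<Rightarrow> nat \<Rightarrow> bool"
  assumes G: "\<And>i j. i < n \<Longrightarrow> j < n \<Longrightarrow> G i j \<longleftrightarrow> \<not> Rel i j"
    and s1: "s \<ge> 1" and sn: "s < n"
  shows "energy n G = 2 * real (n - s)"
proof -
  have deg: "card {j. j < n \<and> G i j} = n - s" if i: "i < n" for i
  proof -
    have "{j. j < n \<and> G i j} = {..<n} - {j. j < n \<and> Rel i j}" using G i by auto
    moreover have "card ({..<n} - {j. j < n \<and> Rel i j}) = n - s"
      using Rcard[OF i] by (subst card_Diff_subset) auto
    ultimately show ?thesis by simp
  qed
  have "energy n G = 2 * real n * real (n - s) / (real (n - s) + real s)"
  proof (rule graph_energy)
    show "G i j = G j i" if "i < n" "j < n" for i j using that G Rsym by blast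
    show "\<not> G i i" if "i < n" for i using that G Rrefl by blast
    show "card {j. j < n \<and> G i j} = n - s" if "i < n" for i using deg that by blast
    show "x \<in> {complex_of_real (real (n - s)), 0, - complex_of_real (real s)}"
      if "eigenvalue (map_mat complex_of_real (adj_matrix n G)) x" for x
      using eig_multipartite[OF G that] by blast
  qed (use s1 sn in auto)
  also have "real (n - s) + real s = real n" using sn by simp
  finally show ?thesis using sn by simp
qed

lemma energy_clique:
  fixes H :: "nat \<Rightarrow> nat \<Rightarrow> bool"
  assumes H: "\<And>i j. i < n \<Longrightarrow> j < n \<Longrightarrow> H i j \<longleftrightarrow> i \<noteq> j \<and> Rel i j"
    and s2: "s \<ge> 2"
  shows "energy n H = 2 * real n * (real s - 1) / real s"
proof -
  have deg: "card {j. j < n \<and> H i j} = s - 1" if i: "i < n" for i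
  proof -
    have "{j. j < n \<and> H i j} = {j. j < n \<and> Rel i j} - {i}" using H i by auto
    moreover have "card ({j. j < n \<and> Rel i j} - {i}) = s - 1"
      using Rcard[OF i] Rrefl[OF i] i by (subst card_Diff_singleton) auto
    ultimately show ?thesis by simp
  qed
  have "energy n H = 2 * real n * real (s - 1) / ((real s - 1) + 1)"
  proof (rule graph_energy)
    show "H i j = H j i" if "i < n" "j < n" for i j using that H Rsym by blast
    show "\<not> H i i" if "i < n" for i using that H by blast
    show "card {j. j < n \<and> H i j} = s - 1" if "i < n" for i using deg that by blast
    show "x \<in> {complex_of_real (real s - 1), 0, - complex_of_real 1}"
      if "eigenvalue (map_mat complex_of_real (adj_matrix n H)) x" for x
      using eig_cliques[OF H that] s2 by auto
  qed (use s2 in auto)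
  then show ?thesis using s2 by (simp add: of_nat_diff)
qed

end

lemma srg_structure:
  assumes srg: "strongly_regular n adj k e d"
    and nc: "\<not> connected_graph n (complement n adj)"
  shows "\<forall>i j k'. i < n \<longrightarrow> j < n \<longrightarrow> k' < n \<longrightarrow> (i = j \<or> \<not> adj i j) \<longrightarrow> (j = k' \<or> \<not> adj j k') \<longrightarrow> (i = k' \<or> \<not> adj i k')"
proof -
  from srg have sym: "\<And>i j. i < n \<Longrightarrow> j < n \<Longrightarrow> adj i j \<longleftrightarrow> adj j i"
    and irr: "\<And>i. i < n \<Longrightarrow> \<not> adj i i"
    and deg: "\<And>i. i < n \<Longrightarrow> card {w. w < n \<and> adj i w} = k"
    and cn: "\<And>i j. i < n \<Longrightarrow> j < n \<Longrightarrow> adj i j \<Longrightarrow> card {w. w < n \<and> adj i w \<and> adj j w} = e"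
    unfolding strongly_regular_def simple_graph_def degree_def common_nbrs_def by auto
  define Z where "Z x y = {w. w < n \<and> w \<noteq> x \<and> w \<noteq> y \<and> \<not> adj x w \<and> \<not> adj y w}" for x y
  have fZ: "finite (Z x y)" for x y unfolding Z_def by auto
  have count: "card (Z x y) + 2 * k = n + e" if xy: "x < n" "y < n" "adj x y" for x y
  proof -
    define Nx where "Nx = {w. w < n \<and> adj x w}"
    define Ny where "Ny = {w. w < n \<and> adj y w}"
    have yx: "adj y x" using sym xy by blast
    have Zeq: "Z x y = {..<n} - (Nx \<union> Ny)"
      unfolding Z_def Nx_def Ny_def using xy yx by auto
    have sub: "Nx \<union> Ny \<subseteq> {..<n}" unfolding Nx_def Ny_def by auto
    have cZ: "card (Z x y) = n - card (Nx \<union> Ny)"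
      unfolding Zeq using sub by (subst card_Diff_subset) (auto intro: finite_subset)
    have le: "card (Nx \<union> Ny) \<le> n" using card_mono[OF _ sub] by simp
    have fN: "finite Nx" "finite Ny" unfolding Nx_def Ny_def by auto
    have "card Nx + card Ny = card (Nx \<union> Ny) + card (Nx \<inter> Ny)"
      by (rule card_Un_Int[OF fN])
    moreover have "card Nx = k" "card Ny = k" using deg xy unfolding Nx_def Ny_def by auto
    moreover have "Nx \<inter> Ny = {w. w < n \<and> adj x w \<and> adj y w}" unfolding Nx_def Ny_def by auto
    ultimately have "card (Nx \<union> Ny) + e = 2 * k" using cn[OF xy] by simp
    then show ?thesis using cZ le by simp
  qed
  let ?P = "\<lambda>x y. x < n \<and> y < n \<and> complement n adj x y"
  from nc obtain i0 j0 where ij: "i0 < n" "j0 < n" "\<not> ?P\<^sup>*\<^sup>* i0 j0"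
    unfolding connected_graph_def by blast
  have neq: "i0 \<noteq> j0" using ij by auto
  have a0: "adj i0 j0"
  proof (rule ccontr)
    assume "\<not> adj i0 j0"
    then have "?P i0 j0" using ij neq by (simp add: complement_def)
    then show False using ij by auto
  qed
  have Z0: "Z i0 j0 = {}"
  proof (rule ccontr)
    assume "Z i0 j0 \<noteq> {}"
    then obtain w where w: "w < n" "w \<noteq> i0" "w \<noteq> j0" "\<not> adj i0 w" "\<not> adj j0 w"
      unfolding Z_def by auto
    have "?P i0 w" using w ij by (simp add: complement_def)
    moreover have "?P w j0" using w ij sym by (simp add: complement_def)
    ultimately have "?P\<^sup>*\<^sup>* i0 j0"
      using rtranclp.rtrancl_into_rtrancl[OF r_into_rtranclp[of ?P i0 w]] by blast
    then show False using ij by simp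
  qed
  have c0: "n + e = 2 * k" using count[OF ij(1,2) a0] Z0 by simp
  have Zall: "Z x y = {}" if "x < n" "y < n" "adj x y" for x y
    using count[OF that] c0 fZ[of x y] by simp
  show ?thesis
  proof (intro allI impI)
    fix i j l assume l: "i < n" "j < n" "l < n" and r1: "i = j \<or> \<not> adj i j" and r2: "j = l \<or> \<not> adj j l"
    show "i = l \<or> \<not> adj i l"
    proof (cases "i = j \<or> j = l")
      case True then show ?thesis using r1 r2 by auto
    next
      case False
      show ?thesis
      proof (rule ccontr)
        assume "\<not> (i = l \<or> \<not> adj i l)"
        then have il: "i \<noteq> l" "adj i l" by auto
        have "j \<in> Z i l" unfolding Z_def using False r1 r2 l sym by auto
        then show False using Zall[OF l(1) l(3) il(2)] by simp
      qed
    qed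
  qed
qed

lemma K_cls:
  fixes m i :: nat
  assumes m: "0 < m" and i: "i < m * m"
  shows "card {j. j < m * m \<and> i div m = j div m} = m"
proof -
  define q where "q = i div m"
  have q: "q < m" using i m unfolding q_def by (simp add: div_less_iff_less_mult)
  have dv: "(j div m = q) \<longleftrightarrow> (q * m \<le> j \<and> j < q * m + m)" for j
    using m by (metis add_diff_inverse_nat diff_add_inverse2 div_less_iff_less_mult
    div_times_less_eq_dividend le_less_Suc_eq less_eq_div_iff_mult_less_eq
    mult_Suc not_add_less2)
  have qm: "q * m + m \<le> m * m" using q by (metis Suc_leI add.commute mult_Suc mult_le_mono1)
  have "{j. j < m * m \<and> i div m = j div m} = {q * m..<q * m + m}"
  proof (rule Set.set_eqI)
    fix j
    have dv': "(q = j div m) \<longleftrightarrow> (q * m \<le> j \<and> j < q * m + m)" using dv[of j] by auto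
    show "j \<in> {j. j < m * m \<and> i div m = j div m} \<longleftrightarrow> j \<in> {q * m..<q * m + m}"
      unfolding q_def[symmetric] using dv' qm by auto
  qed
  then show ?thesis by simp
qed

lemma build_iso:
  fixes Rel :: "nat \<Rightarrow> nat \<Rightarrow> bool" and G :: "nat \<Rightarrow> nat \<Rightarrow> bool"
  assumes Rrefl: "\<And>i. i < n \<Longrightarrow> Rel i i"
    and Rsym: "\<And>i j. i < n \<Longrightarrow> j < n \<Longrightarrow> Rel i j \<Longrightarrow> Rel j i"
    and Rtrans: "\<And>i j k. i < n \<Longrightarrow> j < n \<Longrightarrow> k < n \<Longrightarrow> Rel i j \<Longrightarrow> Rel j k \<Longrightarrow> Rel i k"
    and Rcard: "\<And>i. i < n \<Longrightarrow> card {j. j < n \<and> Rel i j} = s"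
    and ns: "n = s * s" and s: "s > 0"
    and G: "\<And>i j. i < n \<Longrightarrow> j < n \<Longrightarrow> G i j \<longleftrightarrow> \<not> Rel i j"
  shows "graph_iso n G (s * s) (complete_multipartite s s)"
proof -
  define cl where "cl i = {j. j < n \<and> Rel i j}" for i
  define Q where "Q = cl ` {..<n}"
  have fQ: "finite Q" unfolding Q_def by simp
  have clsub: "cl i \<subseteq> {..<n}" for i unfolding cl_def by auto
  have cl_eq: "cl i = cl j \<longleftrightarrow> Rel i j" if "i < n" "j < n" for i j
  proof
    assume "cl i = cl j"
    then have "j \<in> cl i" using Rrefl[OF that(2)] that unfolding cl_def by auto
    then show "Rel i j" unfolding cl_def by auto
  next
    assume "Rel i j"
    then show "cl i = cl j" unfolding cl_def using that Rsym Rtrans by blast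
  qed
  have UQ: "\<Union>Q = {..<n}" unfolding Q_def cl_def using Rrefl by auto
  have "s * card Q = card (\<Union>Q)"
  proof (rule card_partition[OF fQ])
    show "finite (\<Union>Q)" unfolding UQ by simp
    show "card c = s" if "c \<in> Q" for c using that unfolding Q_def cl_def using Rcard by auto
    show "c1 \<inter> c2 = {}" if "c1 \<in> Q" "c2 \<in> Q" "c1 \<noteq> c2" for c1 c2
    proof -
      note * = that
      from * obtain i j where ij: "i < n" "j < n" "c1 = cl i" "c2 = cl j" unfolding Q_def by auto
      show "c1 \<inter> c2 = {}"
      proof (rule ccontr)
        assume "c1 \<inter> c2 \<noteq> {}"
        then obtain w where "w \<in> cl i" "w \<in> cl j" using ij by auto
        then have "Rel i j" unfolding cl_def using ij Rsym Rtrans by blast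
        then show False using cl_eq[OF ij(1,2)] ij *(3) by simp
      qed
    qed
  qed
  then have cQ: "card Q = s" using UQ ns s by simp
  obtain h where h: "bij_betw h Q {0..<card Q}" using ex_bij_betw_finite_nat[OF fQ] by blast
  define c where "c i = h (cl i)" for i
  have c_lt: "c i < s" if "i < n" for i
  proof -
    have "cl i \<in> Q" using that unfolding Q_def by auto
    then have "h (cl i) \<in> {0..<card Q}" using bij_betwE[OF h] by blast
    then show ?thesis using cQ unfolding c_def by simp
  qed
  have c_eq: "c i = c j \<longleftrightarrow> Rel i j" if "i < n" "j < n" for i j
  proof -
    have "cl i \<in> Q" "cl j \<in> Q" using that unfolding Q_def by auto
    then have "c i = c j \<longleftrightarrow> cl i = cl j"
      using inj_on_eq_iff[OF bij_betw_imp_inj_on[OF h]] unfolding c_def by blast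
    then show ?thesis using cl_eq[OF that] by simp
  qed
  define rk where "rk i = card {j. j < i \<and> Rel i j}" for i
  have rk_lt: "rk i < s" if i: "i < n" for i
  proof -
    have "{j. j < i \<and> Rel i j} < cl i"
      using i Rrefl[OF i] unfolding cl_def by auto
    then have "rk i < card (cl i)" unfolding rk_def by (intro psubset_card_mono) (auto simp: cl_def)
    then show ?thesis using Rcard[OF i] unfolding cl_def by simp
  qed
  have rk_mono: "rk i < rk j" if "i < j" "j < n" "Rel i j" for i j
  proof -
    have "{k. k < i \<and> Rel i k} < {k. k < j \<and> Rel j k}"
    proof
      show "{k. k < i \<and> Rel i k} \<subseteq> {k. k < j \<and> Rel j k}"
      proof
        fix k assume "k \<in> {k. k < i \<and> Rel i k}"
        then show "k \<in> {k. k < j \<and> Rel j k}" using that Rsym[of i j] Rtrans[of j i k] by auto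
      qed
      show "{k. k < i \<and> Rel i k} \<noteq> {k. k < j \<and> Rel j k}"
        using that Rsym[of i j] by auto
    qed
    then show ?thesis unfolding rk_def by (intro psubset_card_mono) auto
  qed
  define f where "f i = c i * s + rk i" for i
  have fdiv: "f i div s = c i" if "i < n" for i
    using rk_lt[OF that] s unfolding f_def by simp
  have fmod: "f i mod s = rk i" if "i < n" for i
    using rk_lt[OF that] s unfolding f_def by simp
  have flt: "f i < s * s" if "i < n" for i
  proof -
    have "f i < c i * s + s" using rk_lt[OF that] unfolding f_def by simp
    also have "\<dots> = Suc (c i) * s" by simp
    also have "\<dots> \<le> s * s" using c_lt[OF that] by (intro mult_le_mono1) simp
    finally show ?thesis .
  qed
  have inj: "inj_on f {0..<n}"
  proof (rule inj_onI)
    fix i j assume i: "i \<in> {0..<n}" and j: "j \<in> {0..<n}" and fij: "f i = f j"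
    have cc: "c i = c j" using fdiv i j fij by (metis atLeastLessThan_iff)
    have rr: "rk i = rk j" using fmod i j fij by (metis atLeastLessThan_iff)
    have R: "Rel i j" using c_eq cc i j by auto
    show "i = j"
    proof (rule ccontr)
      assume "i \<noteq> j"
      then have "i < j \<or> j < i" by auto
      then show False
      proof
        assume "i < j" then show False using rk_mono[of i j] R rr j by auto
      next
        assume "j < i" then show False using rk_mono[of j i] Rsym[of i j] R rr i j by auto
      qed
    qed
  qed
  have img: "f ` {0..<n} = {0..<s * s}"
  proof (rule card_subset_eq)
    show "f ` {0..<n} \<subseteq> {0..<s * s}" using flt by auto
    show "card (f ` {0..<n}) = card {0..<s * s}" using card_image[OF inj] ns by simp
  qed simp
  have bij: "bij_betw f {0..<n} {0..<s * s}" using inj img unfolding bij_betw_def by simp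
  show ?thesis unfolding graph_iso_def
  proof (intro exI conjI allI impI)
    show "bij_betw f {0..<n} {0..<s * s}" by (rule bij)
    fix i j assume i: "i < n" and j: "j < n"
    show "G i j \<longleftrightarrow> complete_multipartite s s (f i) (f j)"
      unfolding complete_multipartite_def using G[OF i j] flt[OF i] flt[OF j] fdiv[OF i] fdiv[OF j] c_eq[OF i j]
      by auto
  qed
qed

theorem mainTheorem6:
  fixes n :: nat and adj :: "nat \<Rightarrow> nat \<Rightarrow> bool"
  assumes "is_srg n adj"
    and "connected_graph n adj"
    and "imprimitive_srg n adj"
  shows "(energy n adj = energy n (complement n adj) \<longleftrightarrow>
            (\<exists>m::nat. m > 1 \<and> graph_iso n adj (m * m) (complete_multipartite m m)))
         \<and> (\<forall>m::nat. m > 1 \<longrightarrow>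
              energy (m * m) (complete_multipartite m m) = 2 * (real m - 1) * real m
            \<and> (\<exists>q::nat. energy (m * m) (complete_multipartite m m) = 4 * real q))"
proof -
  have Kpart: "energy (m * m) (complete_multipartite m m) = 2 * (real m - 1) * real m
            \<and> (\<exists>q::nat. energy (m * m) (complete_multipartite m m) = 4 * real q)" if m: "m > 1" for m :: nat
  proof -
    let ?Rel = "\<lambda>i j::nat. i div m = j div m"
    have mm: "m < m * m" using m by simp
    have E: "energy (m * m) (complete_multipartite m m) = 2 * real (m * m - m)"
    proof (rule energy_multi[where Rel = ?Rel])
      show "card {j. j < m * m \<and> i div m = j div m} = m" if "i < m * m" for i
        using K_cls[OF _ that] m by simp
      show "complete_multipartite m m i j = (\<not> i div m = j div m)" if "i < m * m" "j < m * m" for i j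
        using that unfolding complete_multipartite_def by simp
    qed (use m mm in auto)
    have r: "real (m * m - m) = (real m - 1) * real m" using mm by (simp add: of_nat_diff algebra_simps)
    have ev: "even (m * m - m)"
    proof -
      have "m * m - m = m * (m - 1)" by (simp add: diff_mult_distrib2)
      moreover have "even (m * (m - 1))" using m by (cases "even m") auto
      ultimately show ?thesis by simp
    qed
    then obtain q where q: "m * m - m = 2 * q" by blast
    have "real (m * m - m) = 2 * real q" using q by simp
    then have E4: "energy (m * m) (complete_multipartite m m) = 4 * real q" using E by simp
    have E2: "energy (m * m) (complete_multipartite m m) = 2 * (real m - 1) * real m" using E r by simp
    show ?thesis using E4 E2 by blast
  qed
  from assms(1) obtain k e d where srg: "strongly_regular n adj k e d" unfolding is_srg_def by blast
  have nc: "\<not> connected_graph n (complement n adj)"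
    using assms(2,3) unfolding imprimitive_srg_def primitive_srg_def by blast
  from srg have sym: "\<And>i j. i < n \<Longrightarrow> j < n \<Longrightarrow> adj i j \<longleftrightarrow> adj j i"
    and irr: "\<And>i. i < n \<Longrightarrow> \<not> adj i i"
    and deg: "\<And>i. i < n \<Longrightarrow> card {w. w < n \<and> adj i w} = k"
    and ncomp: "\<exists>i<n. \<exists>j<n. i \<noteq> j \<and> \<not> adj i j"
    and nedge: "\<exists>i<n. \<exists>j<n. adj i j"
    unfolding strongly_regular_def simple_graph_def degree_def by auto
  note tr0 = srg_structure[OF srg nc]
  define Rel where "Rel i j = (i = j \<or> \<not> adj i j)" for i j
  define s where "s = n - k"
  have Rrefl: "\<And>i. i < n \<Longrightarrow> Rel i i" unfolding Rel_def by simp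
  have Rsym: "\<And>i j. i < n \<Longrightarrow> j < n \<Longrightarrow> Rel i j \<Longrightarrow> Rel j i" unfolding Rel_def using sym by blast
  have Rtrans: "\<And>i j l. i < n \<Longrightarrow> j < n \<Longrightarrow> l < n \<Longrightarrow> Rel i j \<Longrightarrow> Rel j l \<Longrightarrow> Rel i l"
    unfolding Rel_def using tr0 by blast
  have clset: "{j. j < n \<and> Rel i j} = {..<n} - {w. w < n \<and> adj i w}" if "i < n" for i
    unfolding Rel_def using that irr by auto
  have Rcard: "\<And>i. i < n \<Longrightarrow> card {j. j < n \<and> Rel i j} = s"
  proof -
    fix i assume i: "i < n"
    show "card {j. j < n \<and> Rel i j} = s"
      unfolding clset[OF i] s_def using deg[OF i] by (subst card_Diff_subset) auto
  qed
  obtain a b where ab: "a < n" "b < n" "a \<noteq> b" "\<not> adj a b" using ncomp by blast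
  have s2: "s \<ge> 2"
  proof -
    have "{a, b} \<subseteq> {j. j < n \<and> Rel a j}" using ab unfolding Rel_def by auto
    then have "card {a, b} \<le> card {j. j < n \<and> Rel a j}" by (intro card_mono) auto
    then show ?thesis using Rcard[OF ab(1)] ab(3) by simp
  qed
  obtain a' b' where ab': "a' < n" "b' < n" "adj a' b'" using nedge by blast
  have kpos: "k > 0"
  proof -
    have "b' \<in> {w. w < n \<and> adj a' w}" using ab' by auto
    then have "{w. w < n \<and> adj a' w} \<noteq> {}" by auto
    then have "card {w. w < n \<and> adj a' w} \<noteq> 0" by simp
    then show ?thesis using deg[OF ab'(1)] by simp
  qed
  have kn: "k \<le> n"
  proof -
    have "card {w. w < n \<and> adj a' w} \<le> card {..<n}" by (intro card_mono) auto
    then show ?thesis using deg[OF ab'(1)] by simp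
  qed
  have sn: "s < n" using kpos kn ab'(1) unfolding s_def by simp
  have EG: "energy n adj = 2 * real (n - s)"
  proof (rule energy_multi[where Rel = Rel, OF Rrefl Rsym Rtrans Rcard])
    show "adj i j = (\<not> Rel i j)" if "i < n" "j < n" for i j
      using that irr unfolding Rel_def by auto
  qed (use s2 sn in auto)
  have EC: "energy n (complement n adj) = 2 * real n * (real s - 1) / real s"
  proof (rule energy_clique[where Rel = Rel, OF Rrefl Rsym Rtrans Rcard])
    show "complement n adj i j = (i \<noteq> j \<and> Rel i j)" if "i < n" "j < n" for i j
      using that unfolding Rel_def complement_def by auto
  qed (use s2 in auto)
  have eq_iff: "energy n adj = energy n (complement n adj) \<longleftrightarrow> n = s * s"
  proof -
    have sp: "real s > 0" using s2 by simp
    have "energy n adj = energy n (complement n adj) \<longleftrightarrow>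
          2 * (real n - real s) = 2 * real n * (real s - 1) / real s"
      using EG EC sn by (simp add: of_nat_diff)
    also have "\<dots> \<longleftrightarrow> (real n - real s) * real s = real n * (real s - 1)"
      using sp by (simp add: field_simps)
    also have "\<dots> \<longleftrightarrow> real n = real s * real s" by (simp add: algebra_simps)
    also have "\<dots> \<longleftrightarrow> n = s * s" by (metis of_nat_eq_iff of_nat_mult)
    finally show ?thesis .
  qed
  have part1: "energy n adj = energy n (complement n adj) \<longleftrightarrow>
            (\<exists>m::nat. m > 1 \<and> graph_iso n adj (m * m) (complete_multipartite m m))"
  proof
    assume "energy n adj = energy n (complement n adj)"
    then have ns: "n = s * s" using eq_iff by simp
    have "graph_iso n adj (s * s) (complete_multipartite s s)"
    proof (rule build_iso[where Rel = Rel, OF Rrefl Rsym Rtrans Rcard ns])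
      show "adj i j = (\<not> Rel i j)" if "i < n" "j < n" for i j
        using that irr unfolding Rel_def by auto
    qed (use s2 in auto)
    then show "\<exists>m::nat. m > 1 \<and> graph_iso n adj (m * m) (complete_multipartite m m)"
      using s2 by (intro exI[of _ s]) auto
  next
    assume "\<exists>m::nat. m > 1 \<and> graph_iso n adj (m * m) (complete_multipartite m m)"
    then obtain m f where m: "m > 1" and bij: "bij_betw f {0..<n} {0..<m * m}"
      and iso: "\<And>i j. i < n \<Longrightarrow> j < n \<Longrightarrow> adj i j \<longleftrightarrow> complete_multipartite m m (f i) (f j)"
      unfolding graph_iso_def by blast
    have nmm: "n = m * m" using bij_betw_same_card[OF bij] by simp
    define cl0 where "cl0 = {j. j < n \<and> Rel a j}"
    have fa: "f a < m * m" using bij ab(1) by (auto dest: bij_betwE)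
    have img: "f ` cl0 = {j. j < m * m \<and> f a div m = j div m}"
    proof (rule Set.set_eqI, rule iffI)
      fix y assume "y \<in> f ` cl0"
      then obtain j where j: "j < n" "Rel a j" "y = f j" unfolding cl0_def by auto
      have fj: "f j < m * m" using bij j(1) by (auto dest: bij_betwE)
      show "y \<in> {j. j < m * m \<and> f a div m = j div m}"
      proof (cases "a = j")
        case True then show ?thesis using j fj by simp
      next
        case False
        then have "\<not> adj a j" using j(2) unfolding Rel_def by simp
        then show ?thesis using iso[OF ab(1) j(1)] fa fj j(3) unfolding complete_multipartite_def by auto
      qed
    next
      fix y assume y: "y \<in> {j. j < m * m \<and> f a div m = j div m}"
      then have "y \<in> f ` {0..<n}" using bij unfolding bij_betw_def by auto
      then obtain j where j: "j < n" "y = f j" by auto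
      have "\<not> adj a j" using iso[OF ab(1) j(1)] y j(2) unfolding complete_multipartite_def by auto
      then have "Rel a j" unfolding Rel_def by simp
      then show "y \<in> f ` cl0" using j unfolding cl0_def by auto
    qed
    have "inj_on f cl0" using bij_betw_imp_inj_on[OF bij] by (rule inj_on_subset) (auto simp: cl0_def)
    then have "card (f ` cl0) = s" using Rcard[OF ab(1)] unfolding cl0_def by (simp add: card_image)
    moreover have "card (f ` cl0) = m" unfolding img using K_cls[OF _ fa] m by simp
    ultimately have "s = m" by simp
    then have "n = s * s" using nmm by simp
    then show "energy n adj = energy n (complement n adj)" using eq_iff by simp
  qed
  show ?thesis using part1 Kpart by blast
qed

end
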